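(* Let $\mathcal{X},\mathcal{Y}$ be finite, $P_X$ a distribution on $\mathcal{X}$, $P_{Y|X}$ a channel, $P_{XY}=P_XP_{Y|X}$ with $\mathcal{Y}$-marginal $P_Y$, and let $R>I(P_X,P_{Y|X})$. Then \[ \min_{Q_{XY}}\Big\{D(Q_{XY}\|P_{XY})+\tfrac12\big[R-D(Q_{XY}\|P_XQ_Y)\big]_+\Big\}=\max_{\lambda\in[1,2]}\Big\{\frac{\lambda-1}{\lambda}\big(R-I^{\mathsf{s}}_\lambda(P_X,P_{Y|X})\big)\Big\}, \] where the minimum is over all joint distributions $Q_{XY}$ on $\mathcal{X}\times\mathcal{Y}$, $Q_Y$ is the $\mathcal{Y}$-marginal of $Q_{XY}$, and $[f]_+=\max\{0,f\}$.
   Context: $D$ is relative entropy and $I(P_X,P_{Y|X})=D(P_{XY}\|P_XP_Y)$. Sibson's $\alpha$-mutual information is $I^{\mathsf{s}}_\lambda(P_X,P_{Y|X})=\frac{\lambda}{\lambda-1}\log\sum_{y}\big(\sum_xP_X(x)P_{Y|X}^\lambda(y|x)\big)^{1/\lambda}$ for $\lambda\neq1$, with $I^{\mathsf{s}}_1=I(P_X,P_{Y|X})$. Logarithms and exponentials use a common arbitrary base. *)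

theory Defs
  imports "HOL-Analysis.Analysis"
begin

definition is_dist :: "('a::finite \<Rightarrow> real) \<Rightarrow> bool" where
  "is_dist P \<longleftrightarrow> (\<forall>a. P a \<ge> 0) \<and> (\<Sum>a\<in>UNIV. P a) = 1"

definition is_channel :: "('a::finite \<Rightarrow> 'b::finite \<Rightarrow> real) \<Rightarrow> bool" where
  "is_channel W \<longleftrightarrow> (\<forall>x. is_dist (W x))"

definition joint :: "('a::finite \<Rightarrow> real) \<Rightarrow> ('a \<Rightarrow> 'b::finite \<Rightarrow> real) \<Rightarrow> 'a \<times> 'b \<Rightarrow> real" where
  "joint P W = (\<lambda>(x, y). P x * W x y)"

definition marg_X :: "('a::finite \<times> 'b::finite \<Rightarrow> real) \<Rightarrow> 'a \<Rightarrow> real" where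
  "marg_X Q = (\<lambda>x. \<Sum>y\<in>UNIV. Q (x, y))"

definition marg_Y :: "('a::finite \<times> 'b::finite \<Rightarrow> real) \<Rightarrow> 'b \<Rightarrow> real" where
  "marg_Y Q = (\<lambda>y. \<Sum>x\<in>UNIV. Q (x, y))"

definition prod_dist :: "('a \<Rightarrow> real) \<Rightarrow> ('b \<Rightarrow> real) \<Rightarrow> 'a \<times> 'b \<Rightarrow> real" where
  "prod_dist P Q = (\<lambda>(x, y). P x * Q y)"

definition rel_ent :: "real \<Rightarrow> ('a::finite \<Rightarrow> real) \<Rightarrow> ('a \<Rightarrow> real) \<Rightarrow> ereal" where
  "rel_ent b Q P =
     (if \<forall>a. Q a > 0 \<longrightarrow> P a > 0
      then ereal (\<Sum>a\<in>{a. Q a > 0}. Q a * log b (Q a / P a))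
      else \<infinity>)"

definition mut_info :: "real \<Rightarrow> ('a::finite \<Rightarrow> real) \<Rightarrow> ('a \<Rightarrow> 'b::finite \<Rightarrow> real) \<Rightarrow> ereal" where
  "mut_info b P W = rel_ent b (joint P W) (prod_dist P (marg_Y (joint P W)))"

definition sibson :: "real \<Rightarrow> real \<Rightarrow> ('a::finite \<Rightarrow> real) \<Rightarrow> ('a \<Rightarrow> 'b::finite \<Rightarrow> real) \<Rightarrow> ereal" where
  "sibson b l P W =
     (if l = 1 then mut_info b P W
      else ereal (l / (l - 1) *
        log b (\<Sum>y\<in>UNIV. (\<Sum>x\<in>UNIV. P x * W x y powr l) powr (1 / l))))"

end

theory Submission
  imports Defs
begin

lemma sum_supp:
  fixes q :: "'a::finite \<Rightarrow> real"
  assumes "\<forall>a. q a \<ge> 0"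
  shows "(\<Sum>a\<in>{a. q a > 0}. q a * g a) = (\<Sum>a\<in>UNIV. q a * g a)"
proof (rule sum.mono_neutral_left)
  show "\<forall>i\<in>UNIV - {a. 0 < q a}. q i * g i = 0"
    using assms by (auto simp: not_less intro: antisym)
qed auto

lemma logsum:
  fixes q t :: "'a::finite \<Rightarrow> real"
  assumes b: "b > 1" and q: "\<forall>a. q a \<ge> 0" "sum q UNIV = 1"
    and t: "\<forall>a. t a \<ge> 0" "sum t UNIV \<le> 1" and pos: "\<forall>a. q a > 0 \<longrightarrow> t a > 0"
  shows "0 \<le> (\<Sum>a\<in>{a. q a > 0}. q a * log b (q a / t a))"
proof -
  have lb: "ln b > 0" using b by simp
  have "(\<Sum>a\<in>{a. q a > 0}. (q a - t a) / ln b) \<le> (\<Sum>a\<in>{a. q a > 0}. q a * log b (q a / t a))"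
  proof (rule sum_mono)
    fix a assume "a \<in> {a. q a > 0}"
    then have qa: "q a > 0" and ta: "t a > 0" using pos by auto
    have "ln (t a / q a) \<le> t a / q a - 1" using qa ta by (intro ln_le_minus_one) simp
    moreover have "ln (q a / t a) = - ln (t a / q a)" using qa ta by (simp add: ln_div)
    ultimately have "q a - t a \<le> q a * ln (q a / t a)"
      using qa by (simp add: field_simps)
    then show "(q a - t a) / ln b \<le> q a * log b (q a / t a)"
      using lb by (simp add: log_def divide_right_mono)
  qed
  moreover have "0 \<le> (\<Sum>a\<in>{a. q a > 0}. (q a - t a) / ln b)"
  proof -
    have "(\<Sum>a\<in>{a. q a > 0}. q a) = 1"
      using sum_supp[OF q(1), of "\<lambda>_. 1"] q(2) by simp
    moreover have "(\<Sum>a\<in>{a. q a > 0}. t a) \<le> 1"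
      proof -
      have "(\<Sum>a\<in>{a. q a > 0}. t a) \<le> sum t UNIV" by (rule sum_mono2) (use t in auto)
      then show ?thesis using t by linarith
    qed
    ultimately have "0 \<le> (\<Sum>a\<in>{a. q a > 0}. (q a - t a))"
      by (simp add: sum_subtractf)
    then show ?thesis using lb by (simp add: sum_divide_distrib[symmetric])
  qed
  ultimately show ?thesis by linarith
qed

lemma sum_prod_UNIV:
  fixes f :: "'a::finite \<times> 'b::finite \<Rightarrow> real"
  shows "(\<Sum>a\<in>UNIV. f a) = (\<Sum>y\<in>UNIV. \<Sum>x\<in>UNIV. f (x,y))"
proof -
  have "(\<Sum>a\<in>UNIV. f a) = (\<Sum>x\<in>UNIV. \<Sum>y\<in>UNIV. f (x,y))"
    by (simp add: sum.cartesian_product)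
  also have "\<dots> = (\<Sum>y\<in>UNIV. \<Sum>x\<in>UNIV. f (x,y))" by (rule sum.swap)
  finally show ?thesis .
qed

lemma marg_Y_nonneg:
  assumes "\<forall>a. Q a \<ge> 0" shows "marg_Y Q y \<ge> 0"
  unfolding marg_Y_def using assms by (simp add: sum_nonneg)

lemma marg_Y_ge:
  assumes "\<forall>a. Q a \<ge> 0" shows "Q (x,y) \<le> marg_Y Q y"
  unfolding marg_Y_def using assms by (intro member_le_sum[of x UNIV "\<lambda>x. Q (x,y)"]) auto

lemma marg_Y_dist:
  assumes "is_dist Q" shows "is_dist (marg_Y Q)"
proof -
  have "sum (marg_Y Q) UNIV = sum Q UNIV" by (simp add: marg_Y_def sum_prod_UNIV)
  then show ?thesis using assms marg_Y_nonneg unfolding is_dist_def by auto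
qed

lemma sum_grp:
  fixes Q :: "'a::finite \<times> 'b::finite \<Rightarrow> real"
  assumes "\<forall>a. Q a \<ge> 0"
  shows "(\<Sum>a\<in>{a. Q a > 0}. Q a * g (snd a)) = (\<Sum>y\<in>{y. marg_Y Q y > 0}. marg_Y Q y * g y)"
proof -
  have "(\<Sum>a\<in>{a. Q a > 0}. Q a * g (snd a)) = (\<Sum>a\<in>UNIV. Q a * g (snd a))"
    using sum_supp[OF assms] .
  also have "\<dots> = (\<Sum>y\<in>UNIV. \<Sum>x\<in>UNIV. Q (x,y) * g y)" by (simp add: sum_prod_UNIV)
  also have "\<dots> = (\<Sum>y\<in>UNIV. marg_Y Q y * g y)" by (simp add: marg_Y_def sum_distrib_right)
  also have "\<dots> = (\<Sum>y\<in>{y. marg_Y Q y > 0}. marg_Y Q y * g y)"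
    using sum_supp[of "marg_Y Q" g] marg_Y_nonneg[OF assms] by simp
  finally show ?thesis .
qed

lemma pw_ident:
  fixes q p w m A S l b :: real
  assumes "q>0" "p>0" "w>0" "m>0" "A>0" "S>0" "l>0"
  shows "l*(q*log b (q/(p*w)) - (l-1)/l*(q*log b (q/(p*m))) + q*log b S)
     = q*log b (q/(p*w powr l*A powr (1/l-1)/S)) + (l-1)*(q*log b (m/(A powr (1/l)/S)))"
  using assms by (simp add: log_mult log_divide_pos log_powr field_simps)

lemma pw_ident2:
  fixes p w A S l b :: real
  assumes "p>0" "w>0" "A>0" "S>0" "l>0"
  shows "log b ((p*w powr l*A powr (1/l-1)/S)/(p*w))
     - (l-1)/l * log b ((p*w powr l*A powr (1/l-1)/S)/(p*(A powr (1/l)/S))) = - log b S"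
  using assms by (simp add: log_mult log_divide_pos log_powr field_simps)

lemma step1_real:
  fixes D1 D2 l R L :: real
  assumes "1 \<le> l" "l \<le> 2" "D1 - (l-1)/l * D2 \<ge> - L"
  shows "(l-1)/l * R - L \<le> D1 + 1/2 * max 0 (R - D2)"
proof -
  have mu0: "0 \<le> (l-1)/l" using assms by simp
  have mu1: "(l-1)/l \<le> 1/2" using assms by (simp add: field_simps)
  have "(l-1)/l * (R - D2) \<le> 1/2 * max 0 (R - D2)"
  proof (cases "R - D2 \<ge> 0")
    case True
    then have "max 0 (R - D2) = R - D2" by simp
    then show ?thesis using mult_right_mono[OF mu1 True] by simp
  next
    case False
    then have h: "(l-1)/l * (R - D2) \<le> 0" using mu0 by (intro mult_nonneg_nonpos) auto
    have m0: "1/2 * max 0 (R - D2) = 0" using False by simp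
    from h m0 show ?thesis by linarith
  qed
  moreover have "(l-1)/l * (R - D2) = (l-1)/l * R - (l-1)/l * D2" by (rule right_diff_distrib)
  ultimately show ?thesis using assms(3) by linarith
qed

context
  fixes P :: "'x::finite \<Rightarrow> real" and W :: "'x \<Rightarrow> 'y::finite \<Rightarrow> real"
  assumes P: "is_dist P" and W: "is_channel W"
begin

definition AA :: "real \<Rightarrow> 'y \<Rightarrow> real" where
  "AA l y = (\<Sum>x\<in>UNIV. P x * W x y powr l)"
definition SS :: "real \<Rightarrow> real" where
  "SS l = (\<Sum>y\<in>UNIV. AA l y powr (1/l))"
definition VV :: "real \<Rightarrow> 'y \<Rightarrow> real" where
  "VV l y = AA l y powr (1/l) / SS l"
definition QT :: "real \<Rightarrow> 'x \<times> 'y \<Rightarrow> real" where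
  "QT l = (\<lambda>(x,y). P x * W x y powr l * AA l y powr (1/l - 1) / SS l)"

lemma P0: "P x \<ge> 0" and W0: "W x y \<ge> 0" and Psum: "sum P UNIV = 1" and Wsum: "sum (W x) UNIV = 1"
  using P W by (auto simp: is_dist_def is_channel_def)

lemma AA0: "AA l y \<ge> 0"
  unfolding AA_def by (intro sum_nonneg mult_nonneg_nonneg P0) auto

lemma AA_pos: "AA l y > 0 \<longleftrightarrow> (\<exists>x. P x * W x y > 0)"
proof
  assume "AA l y > 0"
  then obtain x where "P x * W x y powr l \<noteq> 0" unfolding AA_def
    by (metis (no_types, lifting) less_irrefl sum.neutral)
  then show "\<exists>x. P x * W x y > 0" using P0[of x] W0[of x y]
    by (metis linorder_neqE_linordered_idom mult_eq_0_iff mult_nonneg_nonneg not_le powr_zero_eq_one powr_eq_0_iff)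
next
  assume "\<exists>x. P x * W x y > 0"
  then obtain x where x: "P x * W x y > 0" by blast
  then have px: "P x > 0" and wx: "W x y > 0" using P0[of x] W0[of x y]
    by (auto simp: zero_less_mult_iff)
  have "P x * W x y powr l \<le> AA l y" unfolding AA_def
    by (rule member_le_sum[of x UNIV "\<lambda>x. P x * W x y powr l"]) (auto intro: mult_nonneg_nonneg P0)
  moreover have "P x * W x y powr l > 0" using px wx by simp
  ultimately show "AA l y > 0" by linarith
qed

lemma joint_pos: "\<exists>x y. P x * W x y > 0"
proof (rule ccontr)
  assume "\<not> ?thesis"
  then have "\<forall>x y. P x * W x y = 0" using P0 W0
    by (metis linorder_neqE_linordered_idom mult_nonneg_nonneg not_le)
  then have z: "P x * W x y = 0" for x y by blast
  have "P x = 0" for x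
  proof -
    have "P x = P x * (\<Sum>y\<in>UNIV. W x y)" using Wsum[of x] by simp
    also have "\<dots> = (\<Sum>y\<in>UNIV. P x * W x y)" by (rule sum_distrib_left)
    also have "\<dots> = 0" by (rule sum.neutral) (use z in blast)
    finally show ?thesis .
  qed
  then show False using Psum by simp
qed

lemma SS_pos: "SS l > 0"
proof -
  obtain x y where "P x * W x y > 0" using joint_pos by blast
  then have "AA l y > 0" using AA_pos by blast
  then have "AA l y powr (1/l) > 0" by simp
  moreover have "AA l y powr (1/l) \<le> SS l" unfolding SS_def
    by (rule member_le_sum) auto
  ultimately show ?thesis by linarith
qed


lemma QT0: "QT l a \<ge> 0"
  using SS_pos[of l] AA0[of l] P0 W0 unfolding QT_def by (auto split: prod.split)

lemma QT_pos: "QT l (x,y) > 0 \<longleftrightarrow> P x * W x y > 0"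
proof
  assume "QT l (x, y) > 0"
  then have "P x \<noteq> 0" "W x y \<noteq> 0" unfolding QT_def by auto
  then show "P x * W x y > 0" using P0[of x] W0[of x y] by simp
next
  assume h: "P x * W x y > 0"
  then have "AA l y > 0" using AA_pos by blast
  moreover have "P x > 0" "W x y > 0" using h P0[of x] W0[of x y] by (auto simp: zero_less_mult_iff)
  ultimately show "QT l (x,y) > 0" using SS_pos[of l] unfolding QT_def by simp
qed

lemma marg_QT: "marg_Y (QT l) = VV l"
proof
  fix y
  have "marg_Y (QT l) y = (\<Sum>x\<in>UNIV. (P x * W x y powr l) * (AA l y powr (1/l - 1) / SS l))"
    unfolding marg_Y_def QT_def by (simp add: mult.assoc)
  also have "\<dots> = AA l y * (AA l y powr (1/l - 1) / SS l)"
    unfolding AA_def by (rule sum_distrib_right[symmetric])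
  also have "\<dots> = VV l y"
  proof (cases "AA l y = 0")
    case True then show ?thesis by (simp add: VV_def)
  next
    case False
    then have pos: "AA l y > 0" using AA0[of l y] by simp
    have "AA l y * AA l y powr (1/l - 1) = AA l y powr 1 * AA l y powr (1/l - 1)"
      using pos by simp
    also have "\<dots> = AA l y powr (1 + (1/l - 1))" by (rule powr_add[symmetric])
    also have "\<dots> = AA l y powr (1/l)" by simp
    finally show ?thesis by (simp add: VV_def)
  qed
  finally show "marg_Y (QT l) y = VV l y" .
qed

lemma sum_VV: "sum (VV l) UNIV = 1"
  using SS_pos[of l] unfolding VV_def SS_def by (simp add: sum_divide_distrib[symmetric])

lemma VV0: "VV l y \<ge> 0"
  using SS_pos[of l] unfolding VV_def by simp

lemma dist_QT: "is_dist (QT l)"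
proof -
  have "sum (QT l) UNIV = sum (marg_Y (QT l)) UNIV"
    by (simp add: sum_prod_UNIV marg_Y_def)
  then show ?thesis unfolding is_dist_def using QT0 marg_QT sum_VV by simp
qed


lemma key:
  assumes b: "b > 1" and l: "l \<ge> 1" and Q: "is_dist Q"
    and ac: "\<forall>a. Q a > 0 \<longrightarrow> joint P W a > 0"
  shows "(\<Sum>a\<in>{a. Q a > 0}. Q a * log b (Q a / joint P W a))
     - (l-1)/l * (\<Sum>a\<in>{a. Q a > 0}. Q a * log b (Q a / prod_dist P (marg_Y Q) a))
     \<ge> - log b (SS l)"
proof -
  define Sp where "Sp = {a. Q a > 0}"
  define m where "m = marg_Y Q"
  have Q0: "\<forall>a. Q a \<ge> 0" and Q1: "sum Q UNIV = 1" using Q by (auto simp: is_dist_def)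
  have lpos: "l > 0" using l by simp
  define t1 where "t1 a = Q a * log b (Q a / joint P W a)" for a
  define t2 where "t2 a = Q a * log b (Q a / prod_dist P m a)" for a
  define u1 where "u1 a = Q a * log b (Q a / QT l a)" for a
  define g where "g y = log b (m y / VV l y)" for y
  have pt: "l*(t1 a - (l-1)/l*t2 a + Q a * log b (SS l)) = u1 a + (l-1)*(Q a * g (snd a))"
    if "a \<in> Sp" for a
  proof -
    obtain x y where a: "a = (x,y)" by fastforce
    have qa: "Q (x,y) > 0" using that a Sp_def by simp
    then have j: "P x * W x y > 0" using ac by (auto simp: joint_def)
    then have px: "P x > 0" and wx: "W x y > 0" using P0[of x] W0[of x y]
      by (auto simp: zero_less_mult_iff)
    have my: "m y > 0" using marg_Y_ge[OF Q0, of x y] qa m_def by simp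
    have Ay: "AA l y > 0" using j AA_pos by blast
    show ?thesis
      using pw_ident[OF qa px wx my Ay SS_pos lpos, of b]
      by (simp add: a t1_def t2_def u1_def g_def joint_def prod_dist_def QT_def VV_def)
  qed
  have sQ: "(\<Sum>a\<in>Sp. Q a) = 1" using sum_supp[OF Q0, of "\<lambda>_. 1"] Q1 Sp_def by simp
  define c where "c = (l-1)/l"
  define L where "L = log b (SS l)"
  have "l*((\<Sum>a\<in>Sp. t1 a) - c*(\<Sum>a\<in>Sp. t2 a) + L)
      = l*(\<Sum>a\<in>Sp. t1 a) - (l*c)*(\<Sum>a\<in>Sp. t2 a) + (l*L)*(\<Sum>a\<in>Sp. Q a)"
    using sQ by (simp add: algebra_simps)
  also have "\<dots> = (\<Sum>a\<in>Sp. l*t1 a) - (\<Sum>a\<in>Sp. (l*c)*t2 a) + (\<Sum>a\<in>Sp. (l*L)*Q a)"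
    by (simp only: sum_distrib_left)
  also have "\<dots> = (\<Sum>a\<in>Sp. l*t1 a - (l*c)*t2 a + (l*L)*Q a)"
    by (simp only: sum.distrib sum_subtractf)
  also have "\<dots> = (\<Sum>a\<in>Sp. l*(t1 a - c*t2 a + Q a * L))"
    by (rule sum.cong) (auto simp: algebra_simps)
  finally have "l*((\<Sum>a\<in>Sp. t1 a) - (l-1)/l*(\<Sum>a\<in>Sp. t2 a) + log b (SS l))
      = (\<Sum>a\<in>Sp. l*(t1 a - (l-1)/l*t2 a + Q a * log b (SS l)))"
    unfolding c_def L_def .
  also have "\<dots> = (\<Sum>a\<in>Sp. u1 a + (l-1)*(Q a * g (snd a)))"
    using pt by (rule sum.cong[OF refl])
  also have "\<dots> = (\<Sum>a\<in>Sp. u1 a) + (l-1)*(\<Sum>a\<in>Sp. Q a * g (snd a))"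
    by (simp add: sum.distrib sum_distrib_left)
  finally have eq: "l*((\<Sum>a\<in>Sp. t1 a) - (l-1)/l*(\<Sum>a\<in>Sp. t2 a) + log b (SS l))
      = (\<Sum>a\<in>Sp. u1 a) + (l-1)*(\<Sum>a\<in>Sp. Q a * g (snd a))" .
  have u: "0 \<le> (\<Sum>a\<in>Sp. u1 a)"
    unfolding Sp_def u1_def
  proof (rule logsum[OF b Q0 Q1])
    show "\<forall>a. QT l a \<ge> 0" using QT0 by blast
    show "sum (QT l) UNIV \<le> 1" using dist_QT[of l] by (simp add: is_dist_def)
    show "\<forall>a. Q a > 0 \<longrightarrow> QT l a > 0"
    proof (intro allI impI)
      fix a assume "Q a > 0"
      then have "joint P W a > 0" using ac by blast
      then show "QT l a > 0" using QT_pos by (cases a) (simp add: joint_def)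
    qed
  qed
  have gg: "(\<Sum>a\<in>Sp. Q a * g (snd a)) = (\<Sum>y\<in>{y. m y > 0}. m y * log b (m y / VV l y))"
    unfolding Sp_def m_def g_def by (rule sum_grp[OF Q0])
  have md: "is_dist m" using marg_Y_dist[OF Q] m_def by simp
  have v: "0 \<le> (\<Sum>a\<in>Sp. Q a * g (snd a))"
    unfolding gg
  proof (rule logsum[OF b])
    show "\<forall>a. m a \<ge> 0" "sum m UNIV = 1" using md by (auto simp: is_dist_def)
    show "\<forall>a. VV l a \<ge> 0" using VV0 by blast
    show "sum (VV l) UNIV \<le> 1" using sum_VV by simp
    show "\<forall>y. m y > 0 \<longrightarrow> VV l y > 0"
    proof (intro allI impI)
      fix y assume "m y > 0"
      then have "(\<Sum>x\<in>UNIV. Q (x,y)) \<noteq> 0" unfolding m_def marg_Y_def by simp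
      then obtain x where "Q (x,y) \<noteq> 0" by (meson sum.neutral)
      then have "Q (x,y) > 0" using Q0 by (metis less_eq_real_def)
      then have "P x * W x y > 0" using ac by (auto simp: joint_def)
      then have "AA l y > 0" using AA_pos by blast
      then show "VV l y > 0" using SS_pos[of l] by (simp add: VV_def)
    qed
  qed
  have "0 \<le> l*((\<Sum>a\<in>Sp. t1 a) - (l-1)/l*(\<Sum>a\<in>Sp. t2 a) + log b (SS l))"
    using eq u v l by simp
  then have "0 \<le> (\<Sum>a\<in>Sp. t1 a) - (l-1)/l*(\<Sum>a\<in>Sp. t2 a) + log b (SS l)"
    using lpos by (simp add: zero_le_mult_iff)
  then show ?thesis unfolding Sp_def t1_def t2_def m_def by simp
qed


lemma SS_formula: "(\<Sum>y\<in>UNIV. (\<Sum>x\<in>UNIV. P x * W x y powr l) powr (1 / l)) = SS l"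
  unfolding SS_def AA_def ..

lemma sibson_eq: "l \<noteq> 1 \<Longrightarrow> sibson b l P W = ereal (l / (l - 1) * log b (SS l))"
  unfolding sibson_def SS_formula by simp

lemma joint_dist: "is_dist (joint P W)"
proof -
  have "sum (joint P W) UNIV = (\<Sum>x\<in>UNIV. P x * (\<Sum>y\<in>UNIV. W x y))"
    unfolding joint_def by (simp add: sum.cartesian_product sum_distrib_left)
  then show ?thesis using Psum Wsum P0 W0 unfolding is_dist_def
    by (auto simp: joint_def)
qed

lemma step1:
  assumes b: "b > 1" and l: "l \<in> {1..2}" and Q: "is_dist Q"
  shows "ereal ((l - 1) / l) * (ereal R - sibson b l P W)
     \<le> rel_ent b Q (joint P W) + ereal (1/2) * max 0 (ereal R - rel_ent b Q (prod_dist P (marg_Y Q)))"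
proof (cases "\<forall>a. Q a > 0 \<longrightarrow> joint P W a > 0")
  case False
  have "max 0 (ereal R - rel_ent b Q (prod_dist P (marg_Y Q))) \<ge> 0" by simp
  then have "ereal (1/2) * max 0 (ereal R - rel_ent b Q (prod_dist P (marg_Y Q))) \<ge> 0"
    by (intro ereal_0_le_mult) auto
  then have "ereal (1/2) * max 0 (ereal R - rel_ent b Q (prod_dist P (marg_Y Q))) \<noteq> -\<infinity>"
    by auto
  moreover have "rel_ent b Q (joint P W) = \<infinity>" using False by (simp add: rel_ent_def)
  ultimately show ?thesis by simp
next
  case True
  have Q0: "\<forall>a. Q a \<ge> 0" using Q by (simp add: is_dist_def)
  have ac2: "\<forall>a. Q a > 0 \<longrightarrow> prod_dist P (marg_Y Q) a > 0"
  proof (intro allI impI)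
    fix a assume qa: "Q a > 0"
    obtain x y where a: "a = (x,y)" by fastforce
    have "P x * W x y > 0" using True qa a by (auto simp: joint_def)
    then have "P x > 0" using P0[of x] W0[of x y] by (auto simp: zero_less_mult_iff)
    moreover have "marg_Y Q y > 0" using marg_Y_ge[OF Q0, of x y] qa a by simp
    ultimately show "prod_dist P (marg_Y Q) a > 0" by (simp add: a prod_dist_def)
  qed
  define D1 where "D1 = (\<Sum>a\<in>{a. Q a > 0}. Q a * log b (Q a / joint P W a))"
  define D2 where "D2 = (\<Sum>a\<in>{a. Q a > 0}. Q a * log b (Q a / prod_dist P (marg_Y Q) a))"
  have r1: "rel_ent b Q (joint P W) = ereal D1" using True by (simp add: rel_ent_def D1_def)
  have r2: "rel_ent b Q (prod_dist P (marg_Y Q)) = ereal D2" using ac2 by (simp add: rel_ent_def D2_def)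
  have l1: "1 \<le> l" "l \<le> 2" using l by auto
  have k: "D1 - (l-1)/l * D2 \<ge> - log b (SS l)"
    using key[OF b l1(1) Q True] unfolding D1_def D2_def .
  have rhs: "rel_ent b Q (joint P W) + ereal (1/2) * max 0 (ereal R - rel_ent b Q (prod_dist P (marg_Y Q)))
      = ereal (D1 + 1/2 * max 0 (R - D2))"
    by (simp add: r1 r2 max_def)
  show ?thesis
  proof (cases "l = 1")
    case True
    have "0 \<le> D1"
      unfolding D1_def
    proof (rule logsum[OF b])
      show "\<forall>a. Q a \<ge> 0" "sum Q UNIV = 1" using Q by (auto simp: is_dist_def)
      show "\<forall>a. joint P W a \<ge> 0" "sum (joint P W) UNIV \<le> 1" using joint_dist by (auto simp: is_dist_def)
      show "\<forall>a. Q a > 0 \<longrightarrow> joint P W a > 0" by fact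
    qed
    then have "0 \<le> D1 + 1/2 * max 0 (R - D2)" by simp
    then show ?thesis using True rhs by (simp add: zero_ereal_def[symmetric])
  next
    case False
    have "(l-1)/l * R - log b (SS l) \<le> D1 + 1/2 * max 0 (R - D2)"
      by (rule step1_real[OF l1 k])
    moreover have "(l-1)/l * (R - l/(l-1) * log b (SS l)) = (l-1)/l * R - log b (SS l)"
      using False l1 by (simp add: field_simps)
    ultimately show ?thesis using False rhs by (simp add: sibson_eq)
  qed
qed


definition Sp0 :: "('x \<times> 'y) set" where "Sp0 = {a. joint P W a > 0}"

lemma QT_supp: "{a. QT l a > 0} = Sp0"
  unfolding Sp0_def by (auto simp: QT_pos joint_def)

definition dd :: "real \<Rightarrow> real \<Rightarrow> real" where
  "dd b l = (\<Sum>a\<in>Sp0. QT l a * log b (QT l a / prod_dist P (VV l) a))"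
definition ee :: "real \<Rightarrow> real \<Rightarrow> real" where
  "ee b l = (\<Sum>a\<in>Sp0. QT l a * log b (QT l a / joint P W a))"

lemma Sp0_facts: assumes "(x,y) \<in> Sp0" shows "P x > 0" "W x y > 0" "AA l y > 0"
proof -
  have j: "P x * W x y > 0" using assms by (simp add: Sp0_def joint_def)
  then show "P x > 0" "W x y > 0" using P0[of x] W0[of x y] by (auto simp: zero_less_mult_iff)
  show "AA l y > 0" using j AA_pos by blast
qed

lemma rel_QT_prod: "rel_ent b (QT l) (prod_dist P (marg_Y (QT l))) = ereal (dd b l)"
proof -
  have "\<forall>a. QT l a > 0 \<longrightarrow> prod_dist P (VV l) a > 0"
  proof (intro allI impI)
    fix a assume "QT l a > 0"
    then have "a \<in> Sp0" using QT_supp by blast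
    moreover obtain x y where a: "a = (x,y)" by fastforce
    ultimately have "P x > 0" "AA l y > 0" using Sp0_facts by auto
    then show "prod_dist P (VV l) a > 0" using SS_pos[of l] by (simp add: a prod_dist_def VV_def)
  qed
  then show ?thesis unfolding rel_ent_def dd_def marg_QT QT_supp by simp
qed

lemma rel_QT_joint: "rel_ent b (QT l) (joint P W) = ereal (ee b l)"
proof -
  have "\<forall>a. QT l a > 0 \<longrightarrow> joint P W a > 0" using QT_supp Sp0_def by blast
  then show ?thesis unfolding rel_ent_def ee_def QT_supp by simp
qed

lemma ee_dd: assumes "l > 0" shows "ee b l - (l-1)/l * dd b l = - log b (SS l)"
proof -
  have "ee b l - (l-1)/l * dd b l
     = (\<Sum>a\<in>Sp0. QT l a * (log b (QT l a / joint P W a) - (l-1)/l * log b (QT l a / prod_dist P (VV l) a)))"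
    unfolding ee_def dd_def by (simp add: sum_distrib_left sum_subtractf algebra_simps)
  also have "\<dots> = (\<Sum>a\<in>Sp0. QT l a * (- log b (SS l)))"
  proof (rule sum.cong[OF refl])
    fix a assume a: "a \<in> Sp0"
    obtain x y where xy: "a = (x,y)" by fastforce
    have e1: "QT l a = P x * W x y powr l * AA l y powr (1/l-1) / SS l" by (simp add: xy QT_def)
    have e2: "joint P W a = P x * W x y" by (simp add: xy joint_def)
    have e3: "prod_dist P (VV l) a = P x * (AA l y powr (1/l) / SS l)" by (simp add: xy prod_dist_def VV_def)
    have "log b (QT l a / joint P W a) - (l-1)/l * log b (QT l a / prod_dist P (VV l) a) = - log b (SS l)"
      unfolding e1 e2 e3
      by (rule pw_ident2[OF Sp0_facts(1,2,3)[OF a[unfolded xy]] SS_pos assms])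
    then show "QT l a * (log b (QT l a / joint P W a) - (l-1)/l * log b (QT l a / prod_dist P (VV l) a))
       = QT l a * (- log b (SS l))" by simp
  qed
  also have "\<dots> = - log b (SS l) * (\<Sum>a\<in>Sp0. QT l a)" by (simp add: sum_distrib_left mult.commute)
  also have "(\<Sum>a\<in>Sp0. QT l a) = 1"
    using sum_supp[of "QT l" "\<lambda>_. 1"] QT0 dist_QT[of l] QT_supp[of l] by (simp add: is_dist_def)
  finally show ?thesis by simp
qed

lemma AA1: "AA 1 y = marg_Y (joint P W) y"
  unfolding AA_def marg_Y_def joint_def using W0 by simp

lemma SS1: "SS 1 = 1"
proof -
  have "\<forall>y. marg_Y (joint P W) y \<ge> 0" using AA1 AA0 by metis
  then have "SS 1 = (\<Sum>y\<in>UNIV. marg_Y (joint P W) y)" unfolding SS_def using AA1 by simp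
  also have "\<dots> = sum (joint P W) UNIV" by (simp add: marg_Y_def sum_prod_UNIV)
  also have "\<dots> = 1" using joint_dist by (simp add: is_dist_def)
  finally show ?thesis .
qed

lemma QT1: "QT 1 = joint P W"
proof
  fix a :: "'x \<times> 'y"
  obtain x y where a: "a = (x,y)" by fastforce
  show "QT 1 a = joint P W a"
  proof (cases "AA 1 y = 0")
    case True
    then have "\<not> P x * W x y > 0" using AA_pos[of 1 y] by auto
    then have "P x * W x y = 0" using P0[of x] W0[of x y] by (simp add: zero_less_mult_iff less_le)
    then show ?thesis using True by (simp add: a QT_def joint_def)
  next
    case False
    then show ?thesis using SS1 W0[of x y] by (simp add: a QT_def joint_def)
  qed
qed

lemma mut_dd: "mut_info b P W = ereal (dd b 1)"
  unfolding mut_info_def QT1[symmetric] by (rule rel_QT_prod)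


lemma cAA: "continuous_on {1..2} (\<lambda>l. AA l y)"
  unfolding AA_def
  by (intro continuous_on_sum continuous_on_mult continuous_on_const continuous_on_powr' continuous_on_id)
     (auto simp: W0)

lemma cSS: "continuous_on {1..2} SS"
  unfolding SS_def
  by (intro continuous_on_sum continuous_on_powr' cAA continuous_on_divide continuous_on_const continuous_on_id)
     (auto simp: AA0)

lemma cdd: assumes b: "b > 1" shows "continuous_on {1..2} (dd b)"
proof -
  have "continuous_on {1..2} (\<lambda>l. QT l a * log b (QT l a / prod_dist P (VV l) a))" if a: "a \<in> Sp0" for a
  proof -
    obtain x y where xy: "a = (x,y)" by fastforce
    have px: "P x > 0" and wx: "W x y > 0" and Ay: "\<And>l. AA l y > 0"
      using Sp0_facts a xy by auto
    have SSp: "\<And>l. SS l > 0" by (rule SS_pos)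
    have e: "(\<lambda>l. QT l a * log b (QT l a / prod_dist P (VV l) a)) =
      (\<lambda>l. (P x * W x y powr l * AA l y powr (1/l-1) / SS l) *
        log b ((P x * W x y powr l * AA l y powr (1/l-1) / SS l) / (P x * (AA l y powr (1/l) / SS l))))"
      by (simp add: xy QT_def prod_dist_def VV_def)
    show ?thesis unfolding e
      using px wx Ay SSp b
      by (intro continuous_intros cAA cSS) (auto simp: less_imp_neq[symmetric])
  qed
  then show ?thesis unfolding dd_def by (intro continuous_on_sum) auto
qed

end


theorem proposition1:
  fixes b :: real and R :: real
    and P :: "'x::finite \<Rightarrow> real" and W :: "'x \<Rightarrow> 'y::finite \<Rightarrow> real"
  assumes "b > 1"
    and "is_dist P" and "is_channel W"
    and "ereal R > mut_info b P W"
  shows "\<exists>v::real.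
     (\<exists>Q. is_dist Q \<and>
        rel_ent b Q (joint P W)
          + ereal (1/2) * max 0 (ereal R - rel_ent b Q (prod_dist P (marg_Y Q))) = ereal v)
   \<and> (\<forall>Q. is_dist Q \<longrightarrow>
        ereal v \<le> rel_ent b Q (joint P W)
          + ereal (1/2) * max 0 (ereal R - rel_ent b Q (prod_dist P (marg_Y Q))))
   \<and> (\<exists>l\<in>{1..2}. ereal ((l - 1) / l) * (ereal R - sibson b l P W) = ereal v)
   \<and> (\<forall>l\<in>{1..2}. ereal ((l - 1) / l) * (ereal R - sibson b l P W) \<le> ereal v)"
proof -
  note PW = assms(2,3)
  define F where "F Q = rel_ent b Q (joint P W)
          + ereal (1/2) * max 0 (ereal R - rel_ent b Q (prod_dist P (marg_Y Q)))" for Q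
  define T where "T l = ereal ((l - 1) / l) * (ereal R - sibson b l P W)" for l
  define d where "d = dd P W b"
  have d1: "d 1 < R" using assms(4) mut_dd[OF PW, of b] by (simp add: d_def)
  have cd: "continuous_on {1..2} d" using cdd[OF PW assms(1)] by (simp add: d_def)
  obtain lam where lam: "1 < lam" "lam \<le> 2" and cond: "d lam \<le> R" "d lam = R \<or> lam = 2"
  proof (cases "d 2 \<le> R")
    case True then show ?thesis using that[of 2] by simp
  next
    case False
    then obtain x where x: "1 \<le> x" "x \<le> 2" "d x = R"
      using IVT'[of d 1 R 2] d1 cd by force
    then have "x \<noteq> 1" using d1 by auto
    then show ?thesis using that[of x] x by simp
  qed
  have lam_in: "lam \<in> {1..2}" using lam by simp
  define v where "v = ee P W b lam + 1/2 * max 0 (R - d lam)"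
  have Fv: "F (QT P W lam) = ereal v"
    unfolding F_def v_def d_def
    by (simp add: rel_QT_joint[OF PW] rel_QT_prod[OF PW] max_def)
  have Tv: "T lam = ereal v"
  proof -
    have ed: "ee P W b lam - (lam-1)/lam * d lam = - log b (SS P W lam)"
      using ee_dd[OF PW, of lam b] lam by (simp add: d_def)
    have "(lam-1)/lam * (R - lam/(lam-1) * log b (SS P W lam)) = (lam-1)/lam * R - log b (SS P W lam)"
      using lam by (simp add: field_simps)
    also have "\<dots> = v"
      using cond(2)
    proof (elim disjE)
      assume "d lam = R" then show ?thesis using ed by (simp add: v_def)
    next
      assume l2: "lam = 2"
      then have "max 0 (R - d lam) = R - d lam" using cond by simp
      then show ?thesis using ed l2 by (simp add: v_def algebra_simps)
    qed
    finally show ?thesis unfolding T_def using lam by (simp add: sibson_eq[OF PW])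
  qed
  have A: "is_dist (QT P W lam) \<and> F (QT P W lam) = ereal v" using dist_QT[OF PW] Fv by blast
  have B: "\<forall>Q. is_dist Q \<longrightarrow> ereal v \<le> F Q"
    using step1[OF PW assms(1) lam_in] Tv unfolding T_def F_def by metis
  have C: "\<exists>l\<in>{1..2}. T l = ereal v" using lam_in Tv by blast
  have D: "\<forall>l\<in>{1..2}. T l \<le> ereal v"
    using step1[OF PW assms(1) _ dist_QT[OF PW, of lam]] Fv unfolding T_def F_def by metis
  from A B C D show ?thesis unfolding F_def T_def by blast
qed

end
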